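(* Let $K$ be a polygonal element and suppose $\widetilde V(K)\subset V(K)$, $\widetilde{\bm W}(K)\subset\bm W(K)$ satisfy: $\bm n\times V(K)\subset\bm M(\partial K)$ and $\bm n\times\bm W(K)\times\bm n\subset\bm M(\partial K)$; $\nabla\times V(K)\subset\widetilde{\bm W}(K)$ and $\nabla\times\bm W(K)\subset\widetilde V(K)$; and for every $\bm\mu\in\bm M(\partial K)$, $\bm n\times\bm\mu=0$ implies $\bm\mu=\bm0$. Then $\mathrm{tr}:\widetilde V^\perp(K)\times\widetilde{\bm W}^\perp(K)\to\bm M(\partial K)$ is an isomorphism if and only if: $\gamma$ is injective on $\widetilde V^\perp(K)$, $\gamma$ is injective on $\widetilde{\bm W}^\perp(K)$, and $\gamma\widetilde V^\perp(K)\oplus\gamma\widetilde{\bm W}^\perp(K)=\bm M(\partial K)$.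
   Context: Conventions in 2D: $\nabla\times\bm v=-\partial_yv_1+\partial_xv_2$, $\nabla\times p=(\partial_yp,-\partial_xp)^T$, $\bm n\times\bm v=-n_2v_1+n_1v_2$, $\bm n\times p=(n_2p,-n_1p)^T$, $\bm n\times\bm w\times\bm n:=\bm w-(\bm w\cdot\bm n)\bm n$, with $\bm n$ the unit outward normal of $K$. $V(K)\subset H^1(K)$, $\bm W(K)\subset\bm H(\mathrm{curl};K)$ are finite-dimensional polynomial spaces and $\bm M(\partial K)$ a finite-dimensional space of vector functions on $\partial K$. $\perp$ denotes $L^2(K)$-orthogonal complement in $V(K)$, resp. $\bm W(K)$. $\mathrm{tr}(v,\bm w):=(\bm n\times v+\bm n\times\bm w\times\bm n)|_{\partial K}$. $\gamma$ denotes the map $v\mapsto\bm n\times v|_{\partial K}$ on scalar functions and $\bm w\mapsto\bm n\times\bm w\times\bm n|_{\partial K}$ on vector functions; $\gamma\widetilde V^\perp(K)$, $\gamma\widetilde{\bm W}^\perp(K)$ are the images. *)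

theory Defs
  imports "HOL-Analysis.Analysis"
begin

type_synonym pt = "real^2"

text \<open>A polygon is given by its list of vertices vs (in cyclic order).
  Edge i joins vertex i to vertex i+1 (mod the number of vertices).\<close>

definition nxt :: "pt list \<Rightarrow> nat \<Rightarrow> nat" where
  "nxt vs i = Suc i mod length vs"

definition edge :: "pt list \<Rightarrow> nat \<Rightarrow> pt set" where
  "edge vs i = closed_segment (vs ! i) (vs ! nxt vs i)"

definition oedge :: "pt list \<Rightarrow> nat \<Rightarrow> pt set" where
  "oedge vs i = open_segment (vs ! i) (vs ! nxt vs i)"

definition simple_polygon :: "pt list \<Rightarrow> bool" where
  "simple_polygon vs \<longleftrightarrow> length vs \<ge> 3 \<and> distinct vs \<and>
     (\<forall>i<length vs. \<forall>j<length vs. i \<noteq> j \<longrightarrow>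
        edge vs i \<inter> edge vs j \<subseteq> {vs ! i, vs ! nxt vs i} \<inter> {vs ! j, vs ! nxt vs j})"

definition poly_boundary :: "pt list \<Rightarrow> pt set" where
  "poly_boundary vs = (\<Union>i<length vs. edge vs i)"

definition poly_elem :: "pt list \<Rightarrow> pt set" where
  "poly_elem vs = inside (poly_boundary vs)"

text \<open>Boundary without the vertices (the normal is only defined there; vertices are a
  null set of the boundary).\<close>
definition Gam :: "pt list \<Rightarrow> pt set" where
  "Gam vs = (\<Union>i<length vs. oedge vs i)"

definition edge_normal :: "pt list \<Rightarrow> nat \<Rightarrow> pt" where
  "edge_normal vs i = (SOME \<nu>. norm \<nu> = 1 \<and> \<nu> \<bullet> (vs ! nxt vs i - vs ! i) = 0 \<and>
      (\<forall>\<^sub>F t in at_right 0. midpoint (vs ! i) (vs ! nxt vs i) + t *\<^sub>R \<nu> \<notin> poly_elem vs))"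

definition nrm :: "pt list \<Rightarrow> pt \<Rightarrow> pt" where
  "nrm vs x = (if \<exists>i<length vs. x \<in> oedge vs i
      then edge_normal vs (SOME i. i < length vs \<and> x \<in> oedge vs i) else 0)"

definition poly2 :: "(pt \<Rightarrow> real) \<Rightarrow> bool" where
  "poly2 f \<longleftrightarrow> (\<exists>N c. \<forall>x. f x = (\<Sum>i\<le>N. \<Sum>j\<le>N. c i j * (x$1)^i * (x$2)^j))"

definition polyvec :: "(pt \<Rightarrow> pt) \<Rightarrow> bool" where
  "polyvec w \<longleftrightarrow> poly2 (\<lambda>x. w x $ 1) \<and> poly2 (\<lambda>x. w x $ 2)"

definition fdspace :: "('a \<Rightarrow> 'b::real_vector) set \<Rightarrow> bool" where
  "fdspace V \<longleftrightarrow> (\<exists>B. finite B \<and> V = {(\<lambda>x. \<Sum>b\<in>B. c b *\<^sub>R b x) | c. True})"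

definition pd :: "2 \<Rightarrow> (pt \<Rightarrow> real) \<Rightarrow> pt \<Rightarrow> real" where
  "pd k f x = deriv (\<lambda>t. f (x + t *\<^sub>R axis k 1)) 0"

definition curl_v :: "(pt \<Rightarrow> pt) \<Rightarrow> pt \<Rightarrow> real" where
  "curl_v w x = - pd 2 (\<lambda>y. w y $ 1) x + pd 1 (\<lambda>y. w y $ 2) x"

definition curl_s :: "(pt \<Rightarrow> real) \<Rightarrow> pt \<Rightarrow> pt" where
  "curl_s p x = vector [pd 2 p x, - pd 1 p x]"

definition cross_vv :: "pt \<Rightarrow> pt \<Rightarrow> real" where
  "cross_vv n v = - n$2 * v$1 + n$1 * v$2"

definition cross_vs :: "pt \<Rightarrow> real \<Rightarrow> pt" where
  "cross_vs n p = vector [n$2 * p, - n$1 * p]"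

text \<open>Restriction to a set (functions on the boundary are represented as functions
  vanishing off the boundary).\<close>
definition restr :: "'a set \<Rightarrow> ('a \<Rightarrow> 'b::zero) \<Rightarrow> 'a \<Rightarrow> 'b" where
  "restr S f x = (if x \<in> S then f x else 0)"

definition gam_s :: "pt list \<Rightarrow> (pt \<Rightarrow> real) \<Rightarrow> pt \<Rightarrow> pt" where
  "gam_s vs v = restr (Gam vs) (\<lambda>x. cross_vs (nrm vs x) (v x))"

text \<open>gamma on vectors: w |-> n x w x n = w - (w.n) n on the boundary\<close>
definition gam_v :: "pt list \<Rightarrow> (pt \<Rightarrow> pt) \<Rightarrow> pt \<Rightarrow> pt" where
  "gam_v vs w = restr (Gam vs) (\<lambda>x. w x - (w x \<bullet> nrm vs x) *\<^sub>R nrm vs x)"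

definition trc :: "pt list \<Rightarrow> (pt \<Rightarrow> real) \<Rightarrow> (pt \<Rightarrow> pt) \<Rightarrow> pt \<Rightarrow> pt" where
  "trc vs v w = (\<lambda>x. gam_s vs v x + gam_v vs w x)"

definition perp_s :: "pt set \<Rightarrow> (pt \<Rightarrow> real) set \<Rightarrow> (pt \<Rightarrow> real) set \<Rightarrow> (pt \<Rightarrow> real) set" where
  "perp_s K V Vt = {v \<in> V. \<forall>u\<in>Vt. integral K (\<lambda>x. v x * u x) = 0}"

definition perp_v :: "pt set \<Rightarrow> (pt \<Rightarrow> pt) set \<Rightarrow> (pt \<Rightarrow> pt) set \<Rightarrow> (pt \<Rightarrow> pt) set" where
  "perp_v K W Wt = {w \<in> W. \<forall>u\<in>Wt. integral K (\<lambda>x. w x \<bullet> u x) = 0}"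

end

theory Submission
  imports Defs "HOL-Library.Function_Algebras"
begin

lemma abstract_iso:
  fixes gs :: "'a::ab_group_add \<Rightarrow> 'c::ab_group_add" and gv :: "'b::ab_group_add \<Rightarrow> 'c"
  assumes P0: "0 \<in> P" and Pd: "\<And>x y. x \<in> P \<Longrightarrow> y \<in> P \<Longrightarrow> x - y \<in> P"
    and Q0: "0 \<in> Q" and Qd: "\<And>x y. x \<in> Q \<Longrightarrow> y \<in> Q \<Longrightarrow> x - y \<in> Q"
    and gsd: "\<And>x y. x \<in> P \<Longrightarrow> y \<in> P \<Longrightarrow> gs (x - y) = gs x - gs y"
    and gvd: "\<And>x y. x \<in> Q \<Longrightarrow> y \<in> Q \<Longrightarrow> gv (x - y) = gv x - gv y"
    and gsM: "gs ` P \<subseteq> M" and gvM: "gv ` Q \<subseteq> M" and Madd: "\<And>a b. a \<in> M \<Longrightarrow> b \<in> M \<Longrightarrow> a + b \<in> M"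
  shows "bij_betw (\<lambda>(v, w). gs v + gv w) (P \<times> Q) M \<longleftrightarrow>
      inj_on gs P \<and> inj_on gv Q \<and> gs ` P \<inter> gv ` Q = {0} \<and>
      {a + b | a b. a \<in> gs ` P \<and> b \<in> gv ` Q} = M"
proof -
  have gs0: "gs 0 = 0" using gsd[OF P0 P0] by simp
  have gv0: "gv 0 = 0" using gvd[OF Q0 Q0] by simp
  have Pn: "- x \<in> P" if "x \<in> P" for x using Pd[OF P0 that] by simp
  have Qn: "- x \<in> Q" if "x \<in> Q" for x using Qd[OF Q0 that] by simp
  have gvn: "gv (- x) = - gv x" if "x \<in> Q" for x using gvd[OF Q0 that] gv0 by simp
  have img: "(\<lambda>(v, w). gs v + gv w) ` (P \<times> Q) = {a + b | a b. a \<in> gs ` P \<and> b \<in> gv ` Q}"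
    by force
  show ?thesis
  proof
    assume b: "bij_betw (\<lambda>(v, w). gs v + gv w) (P \<times> Q) M"
    hence inj: "inj_on (\<lambda>(v, w). gs v + gv w) (P \<times> Q)" and im: "(\<lambda>(v, w). gs v + gv w) ` (P \<times> Q) = M"
      unfolding bij_betw_def by auto
    have 1: "inj_on gs P"
    proof (rule inj_onI)
      fix x y assume "x \<in> P" "y \<in> P" "gs x = gs y"
      thus "x = y" using inj_onD[OF inj, of "(x,0)" "(y,0)"] Q0 by auto
    qed
    have 2: "inj_on gv Q"
    proof (rule inj_onI)
      fix x y assume "x \<in> Q" "y \<in> Q" "gv x = gv y"
      thus "x = y" using inj_onD[OF inj, of "(0,x)" "(0,y)"] P0 by auto
    qed
    have 3: "gs ` P \<inter> gv ` Q = {0}"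
    proof
      show "{0} \<subseteq> gs ` P \<inter> gv ` Q" using P0 Q0 gs0 gv0 by force
      show "gs ` P \<inter> gv ` Q \<subseteq> {0}"
      proof
        fix a assume "a \<in> gs ` P \<inter> gv ` Q"
        then obtain v w where v: "v \<in> P" and w: "w \<in> Q" and a: "a = gs v" "a = gv w" by auto
        have "gs v + gv (- w) = gs 0 + gv 0" using gvn[OF w] a gs0 gv0 by simp
        hence "(v, - w) = (0, 0)" using inj_onD[OF inj, of "(v,-w)" "(0,0)"] v Qn[OF w] P0 Q0 by auto
        thus "a \<in> {0}" using a gs0 by auto
      qed
    qed
    show "inj_on gs P \<and> inj_on gv Q \<and> gs ` P \<inter> gv ` Q = {0} \<and>
      {a + b | a b. a \<in> gs ` P \<and> b \<in> gv ` Q} = M" using 1 2 3 im img by auto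
  next
    assume h: "inj_on gs P \<and> inj_on gv Q \<and> gs ` P \<inter> gv ` Q = {0} \<and>
      {a + b | a b. a \<in> gs ` P \<and> b \<in> gv ` Q} = M"
    have inj: "inj_on (\<lambda>(v, w). gs v + gv w) (P \<times> Q)"
    proof (rule inj_onI, clarsimp)
      fix v1 w1 v2 w2 assume v1: "v1 \<in> P" and w1: "w1 \<in> Q" and v2: "v2 \<in> P" and w2: "w2 \<in> Q"
        and e: "gs v1 + gv w1 = gs v2 + gv w2"
      have "gs v1 - gs v2 = gv w2 - gv w1" using e
        by (metis add.commute add_diff_cancel_right diff_diff_eq2 diff_add_cancel)
      hence "gs (v1 - v2) = gv (w2 - w1)" using gsd[OF v1 v2] gvd[OF w2 w1] by simp
      hence "gs (v1 - v2) \<in> gs ` P \<inter> gv ` Q" using Pd[OF v1 v2] Qd[OF w2 w1] by (metis IntI image_eqI)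
      hence z: "gs (v1 - v2) = 0" "gv (w2 - w1) = 0" using h \<open>gs (v1 - v2) = gv (w2 - w1)\<close> by auto
      have "gs v1 = gs v2" using z gsd[OF v1 v2] by simp
      hence "v1 = v2" using h v1 v2 inj_onD by metis
      moreover have "gv w1 = gv w2" using z gvd[OF w2 w1] by simp
      hence "w1 = w2" using h w1 w2 inj_onD by metis
      ultimately show "v1 = v2 \<and> w1 = w2" by simp
    qed
    show "bij_betw (\<lambda>(v, w). gs v + gv w) (P \<times> Q) M"
      unfolding bij_betw_def using inj img h by auto
  qed
qed


lemma poly2_cont: "poly2 f \<Longrightarrow> continuous_on UNIV f"
proof -
  assume "poly2 f"
  then obtain N c where f: "\<And>x. f x = (\<Sum>i\<le>N. \<Sum>j\<le>N. c i j * (x$1)^i * (x$2)^j)"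
    unfolding poly2_def by blast
  have "continuous_on UNIV (\<lambda>x::pt. \<Sum>i\<le>N. \<Sum>j\<le>N. c i j * (x$1)^i * (x$2)^j)"
    by (intro continuous_intros)
  moreover have "f = (\<lambda>x::pt. \<Sum>i\<le>N. \<Sum>j\<le>N. c i j * (x$1)^i * (x$2)^j)" using f by auto
  ultimately show ?thesis by simp
qed

lemma cont_integrable:
  fixes f :: "pt \<Rightarrow> real"
  assumes f: "continuous_on UNIV f" and S: "bounded S" "S \<in> sets lebesgue"
  shows "f integrable_on S"
proof -
  have lm: "S \<in> lmeasurable" using bounded_set_imp_lmeasurable S by blast
  have "compact (closure S)" using S by (simp add: compact_closure)
  hence "compact (f ` closure S)" using f compact_continuous_image continuous_on_subset by blast
  hence "bounded (f ` closure S)" by (rule compact_imp_bounded)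
  then obtain B where B: "\<And>x. x \<in> closure S \<Longrightarrow> norm (f x) \<le> B"
    unfolding bounded_iff by blast
  show ?thesis
  proof (rule measurable_bounded_by_integrable_imp_integrable[where g = "\<lambda>x. B"])
    show "f \<in> borel_measurable (lebesgue_on S)"
      using continuous_imp_measurable_on_sets_lebesgue continuous_on_subset f S(2) by blast
    show "(\<lambda>x. B) integrable_on S" using integrable_on_const lm by blast
    show "\<And>x. x \<in> S \<Longrightarrow> norm (f x) \<le> B" using B closure_subset by blast
    show "S \<in> sets lebesgue" by (rule S)
  qed
qed

lemma fdspace_0: "fdspace V \<Longrightarrow> 0 \<in> V"
  unfolding fdspace_def by (auto intro!: exI[of _ "\<lambda>_. 0"] simp: zero_fun_def)

lemma fdspace_diff: "fdspace V \<Longrightarrow> a \<in> V \<Longrightarrow> b \<in> V \<Longrightarrow> a - b \<in> V"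
proof -
  assume "fdspace V" "a \<in> V" "b \<in> V"
  then obtain B where B: "V = {(\<lambda>x. \<Sum>b\<in>B. c b *\<^sub>R b x) | c. True}" unfolding fdspace_def by blast
  then obtain ca cb where a: "a = (\<lambda>x. \<Sum>b\<in>B. ca b *\<^sub>R b x)" and b: "b = (\<lambda>x. \<Sum>b\<in>B. cb b *\<^sub>R b x)"
    using \<open>a \<in> V\<close> \<open>b \<in> V\<close> by blast
  have "a - b = (\<lambda>x. \<Sum>b\<in>B. (ca b - cb b) *\<^sub>R b x)"
    unfolding a b by (auto simp: fun_eq_iff sum_subtractf scaleR_diff_left)
  thus ?thesis unfolding B by (intro CollectI exI[of _ "\<lambda>b. ca b - cb b"]) simp
qed

lemma fdspace_add: "fdspace V \<Longrightarrow> a \<in> V \<Longrightarrow> b \<in> V \<Longrightarrow> a + b \<in> V"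
proof -
  assume "fdspace V" "a \<in> V" "b \<in> V"
  then obtain B where B: "V = {(\<lambda>x. \<Sum>b\<in>B. c b *\<^sub>R b x) | c. True}" unfolding fdspace_def by blast
  then obtain ca cb where a: "a = (\<lambda>x. \<Sum>b\<in>B. ca b *\<^sub>R b x)" and b: "b = (\<lambda>x. \<Sum>b\<in>B. cb b *\<^sub>R b x)"
    using \<open>a \<in> V\<close> \<open>b \<in> V\<close> by blast
  have "a + b = (\<lambda>x. \<Sum>b\<in>B. (ca b + cb b) *\<^sub>R b x)"
    unfolding a b by (auto simp: fun_eq_iff sum.distrib scaleR_add_left)
  thus ?thesis unfolding B by (intro CollectI exI[of _ "\<lambda>b. ca b + cb b"]) simp
qed

lemma cross_vs_diff: "cross_vs n (p - q) = cross_vs n p - cross_vs n q"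
  unfolding cross_vs_def by (simp add: vec_eq_iff forall_2 vector_def algebra_simps)

lemma gam_s_diff: "gam_s vs (a - b) = gam_s vs a - gam_s vs b"
  unfolding gam_s_def restr_def by (auto simp: fun_eq_iff cross_vs_diff)

lemma gam_v_diff: "gam_v vs (a - b) = gam_v vs a - gam_v vs b"
  unfolding gam_v_def restr_def by (auto simp: fun_eq_iff inner_diff_left algebra_simps)

theorem lemma5p1:
  fixes vs :: "pt list"
    and V Vt :: "(pt \<Rightarrow> real) set"
    and W Wt M :: "(pt \<Rightarrow> pt) set"
  defines "K \<equiv> poly_elem vs"
  assumes polyg: "simple_polygon vs"
    and V: "fdspace V" "\<forall>v\<in>V. poly2 v"
    and W: "fdspace W" "\<forall>w\<in>W. polyvec w"
    and M: "fdspace M" "\<forall>\<mu>\<in>M. \<forall>x. x \<notin> Gam vs \<longrightarrow> \<mu> x = 0"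
    and Vt: "fdspace Vt" "Vt \<subseteq> V"
    and Wt: "fdspace Wt" "Wt \<subseteq> W"
    and trV: "\<forall>v\<in>V. gam_s vs v \<in> M"
    and trW: "\<forall>w\<in>W. gam_v vs w \<in> M"
    and curlV: "\<forall>v\<in>V. curl_s v \<in> Wt"
    and curlW: "\<forall>w\<in>W. curl_v w \<in> Vt"
    and nM: "\<forall>\<mu>\<in>M. (\<forall>x\<in>Gam vs. cross_vv (nrm vs x) (\<mu> x) = 0) \<longrightarrow> \<mu> = (\<lambda>x. 0)"
  shows "bij_betw (\<lambda>(v, w). trc vs v w) (perp_s K V Vt \<times> perp_v K W Wt) M \<longleftrightarrow>
           inj_on (gam_s vs) (perp_s K V Vt) \<and>
           inj_on (gam_v vs) (perp_v K W Wt) \<and>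
           gam_s vs ` perp_s K V Vt \<inter> gam_v vs ` perp_v K W Wt = {\<lambda>x. 0} \<and>
           {(\<lambda>x. a x + b x) | a b. a \<in> gam_s vs ` perp_s K V Vt \<and> b \<in> gam_v vs ` perp_v K W Wt} = M"
proof -
  have Kb: "bounded K" "K \<in> sets lebesgue"
  proof -
    have cb: "compact (poly_boundary vs)"
      unfolding poly_boundary_def edge_def by (intro compact_UN) auto
    show "bounded K" unfolding K_def poly_elem_def
      using bounded_inside compact_imp_bounded cb by blast
    have "open K" unfolding K_def poly_elem_def
      using open_inside compact_imp_closed cb by blast
    thus "K \<in> sets lebesgue" by simp
  qed
  have Vp: "v \<in> V \<Longrightarrow> continuous_on UNIV v" for v using V(2) poly2_cont by blast
  have Wp: "w \<in> W \<Longrightarrow> continuous_on UNIV w" for w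
  proof -
    assume "w \<in> W"
    hence p: "poly2 (\<lambda>x. w x $ 1)" "poly2 (\<lambda>x. w x $ 2)" using W(2) unfolding polyvec_def by auto
    have "continuous_on UNIV (\<lambda>x. w x $ i)" for i
      using exhaust_2[of i] p poly2_cont by fastforce
    hence "continuous_on UNIV (\<lambda>x. \<chi> i. w x $ i)" by (rule continuous_on_vec_lambda)
    thus ?thesis by simp
  qed
  have intV: "integral K (\<lambda>x. (a - b) x * u x) = integral K (\<lambda>x. a x * u x) - integral K (\<lambda>x. b x * u x)"
    if "a \<in> V" "b \<in> V" "u \<in> Vt" for a b u
  proof -
    have "u \<in> V" using that Vt by auto
    have i: "(\<lambda>x. c x * u x) integrable_on K" if "c \<in> V" for c
      using cont_integrable[OF _ Kb] Vp[OF that] Vp[OF \<open>u \<in> V\<close>] continuous_on_mult by blast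
    show ?thesis using integral_diff[OF i[OF that(1)] i[OF that(2)]] by (simp add: algebra_simps)
  qed
  have intW: "integral K (\<lambda>x. (a - b) x \<bullet> u x) = integral K (\<lambda>x. a x \<bullet> u x) - integral K (\<lambda>x. b x \<bullet> u x)"
    if "a \<in> W" "b \<in> W" "u \<in> Wt" for a b u
  proof -
    have "u \<in> W" using that Wt by auto
    have i: "(\<lambda>x. c x \<bullet> u x) integrable_on K" if "c \<in> W" for c
      using cont_integrable[OF _ Kb] Wp[OF that] Wp[OF \<open>u \<in> W\<close>] continuous_on_inner by blast
    show ?thesis using integral_diff[OF i[OF that(1)] i[OF that(2)]] by (simp add: inner_diff_left)
  qed
  have P0: "0 \<in> perp_s K V Vt" unfolding perp_s_def using fdspace_0[OF V(1)] by simp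
  have Q0: "0 \<in> perp_v K W Wt" unfolding perp_v_def using fdspace_0[OF W(1)] by simp
  have Pd: "x - y \<in> perp_s K V Vt" if "x \<in> perp_s K V Vt" "y \<in> perp_s K V Vt" for x y
    using that fdspace_diff[OF V(1)] intV unfolding perp_s_def by auto
  have Qd: "x - y \<in> perp_v K W Wt" if "x \<in> perp_v K W Wt" "y \<in> perp_v K W Wt" for x y
    using that fdspace_diff[OF W(1)] intW unfolding perp_v_def by auto
  have gsM: "gam_s vs ` perp_s K V Vt \<subseteq> M" using trV unfolding perp_s_def by auto
  have gvM: "gam_v vs ` perp_v K W Wt \<subseteq> M" using trW unfolding perp_v_def by auto
  note A = abstract_iso[OF P0 Pd Q0 Qd gam_s_diff gam_v_diff gsM gvM fdspace_add[OF M(1)]]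
  have e1: "(\<lambda>(v, w). trc vs v w) = (\<lambda>(v, w). gam_s vs v + gam_v vs w)"
    by (simp add: fun_eq_iff trc_def plus_fun_def)
  have e2: "{(\<lambda>x. a x + b x) | a b. a \<in> gam_s vs ` perp_s K V Vt \<and> b \<in> gam_v vs ` perp_v K W Wt}
     = {a + b | a b. a \<in> gam_s vs ` perp_s K V Vt \<and> b \<in> gam_v vs ` perp_v K W Wt}"
    by (simp only: plus_fun_def)
  have e3: "(\<lambda>x. 0) = (0 :: pt \<Rightarrow> pt)" by (simp add: zero_fun_def)
  show ?thesis by (subst e1, subst e2, subst e3, rule A)
qed

end
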